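(* Let $p,q\in\mathcal{S}$, $k^*=\arg\max_kq_k$, $k_*=\arg\min_kq_k$, $\delta\in[0,\log(1/p_{k^*}))$, and for each $m$ let $Y^m\sim\phi_\delta^m$. The map $\beta\mapsto H(T(q,p,\beta)\|q)$ is a continuous strictly decreasing bijection from $\mathbb{R}$ onto the open interval $I=(\log(1/q_{k^*}),\log(1/q_{k_*}))$; for $t\in I$ let $\beta(t)$ be the unique $\beta\in\mathbb{R}$ with $H(T(q,p,\beta)\|q)=t$. Then the sequence $\{-\frac1m\log q^m(Y^m)\}_{m\in\mathbb{N}}$ (i.e. the negative per-symbol reward) satisfies a large deviation principle with rate function $$J_\delta(t)=D_{\mathrm{KL}}\big(T(q,p,\beta(t))\,\|\,\phi_\delta\big)\quad (t\in I),$$ $J_\delta(\log(1/q_{k^*}))=\log(1/\phi_\delta(k^* ))$, $J_\delta(\log(1/q_{k_*}))=\log(1/\phi_\delta(k_* ))$, and $J_\delta(t)=+\infty$ for $t\notin\bar I$.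
   Context: Fix $K\ge2$, $\zeta\in(0,1/K)$. $\mathcal{S}$ is the set of probability vectors on $[K]$ with all entries $>\zeta$ and pairwise distinct. $p^m(y^m)=\prod_i p_{y_i}$ denotes the product distribution on $[K]^m$; the reward of $y^m$ is $r(y^m)=\log q^m(y^m)$. $H(a\|b)=\sum a\log(1/b)$, $D_{\mathrm{KL}}(a\|b)=\sum a\log(a/b)$. Mismatched tilt: $T(q,p,\alpha)_k=p_kq_k^\alpha/\sum_jp_jq_j^\alpha$ for $\alpha\in\mathbb{R}$. For $\delta\in[0,\log(1/p_{k^*}))$, $\alpha(\delta)$ is the unique $\alpha\ge0$ with $D_{\mathrm{KL}}(T(q,p,\alpha)\|p)=\delta$, and $\phi_\delta=T(q,p,\alpha(\delta))$. A sequence of real random variables $\{Z_n\}$ satisfies a large deviation principle (LDP) with rate function $J:\mathbb{R}\to[0,\infty]$ if $J$ is lower semicontinuous with compact level sets and for every Borel set $B$: $-\inf_{t\in B^\circ}J(t)\le\liminf_n\frac1n\log\mathbb{P}(Z_n\in B)\le\limsup_n\frac1n\log\mathbb{P}(Z_n\in B)\le-\inf_{t\in\bar B}J(t)$. *)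

theory Defs
  imports "HOL-Analysis.Analysis"
begin

text \<open>Probability vectors on [K] are represented as functions nat => real,
  with index set {..<K} (i.e. symbols 0,...,K-1).\<close>

definition in_S :: "nat \<Rightarrow> real \<Rightarrow> (nat \<Rightarrow> real) \<Rightarrow> bool" where
  "in_S K \<zeta> p \<longleftrightarrow> (\<Sum>k<K. p k) = 1 \<and> (\<forall>k<K. p k > \<zeta>)
      \<and> (\<forall>i<K. \<forall>j<K. i \<noteq> j \<longrightarrow> p i \<noteq> p j)"

definition cross_ent :: "nat \<Rightarrow> (nat \<Rightarrow> real) \<Rightarrow> (nat \<Rightarrow> real) \<Rightarrow> real" where
  "cross_ent K a b = (\<Sum>k<K. a k * ln (1 / b k))"

definition KL :: "nat \<Rightarrow> (nat \<Rightarrow> real) \<Rightarrow> (nat \<Rightarrow> real) \<Rightarrow> real" where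
  "KL K a b = (\<Sum>k<K. a k * ln (a k / b k))"

definition tilt :: "nat \<Rightarrow> (nat \<Rightarrow> real) \<Rightarrow> (nat \<Rightarrow> real) \<Rightarrow> real \<Rightarrow> nat \<Rightarrow> real" where
  "tilt K q p \<alpha> k = p k * q k powr \<alpha> / (\<Sum>j<K. p j * q j powr \<alpha>)"

definition alpha_of :: "nat \<Rightarrow> (nat \<Rightarrow> real) \<Rightarrow> (nat \<Rightarrow> real) \<Rightarrow> real \<Rightarrow> real" where
  "alpha_of K q p \<delta> = (THE \<alpha>. \<alpha> \<ge> 0 \<and> KL K (tilt K q p \<alpha>) p = \<delta>)"

definition phi :: "nat \<Rightarrow> (nat \<Rightarrow> real) \<Rightarrow> (nat \<Rightarrow> real) \<Rightarrow> real \<Rightarrow> nat \<Rightarrow> real" where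
  "phi K q p \<delta> = tilt K q p (alpha_of K q p \<delta>)"

text \<open>Law of Z_m = -(1/m) log q^m(Y^m) with Y^m ~ r^m (product distribution on [K]^m):
  P(Z_m \<in> B).\<close>
definition neg_reward_prob ::
  "nat \<Rightarrow> (nat \<Rightarrow> real) \<Rightarrow> (nat \<Rightarrow> real) \<Rightarrow> nat \<Rightarrow> real set \<Rightarrow> real" where
  "neg_reward_prob K q r m B =
     (\<Sum>y\<in>{y\<in>PiE {..<m} (\<lambda>_. {..<K}).
            - (1 / real m) * ln (\<Prod>i<m. q (y i)) \<in> B}.
        \<Prod>i<m. r (y i))"

definition elog :: "real \<Rightarrow> ereal" where
  "elog x = (if x \<le> 0 then -\<infinity> else ereal (ln x))"

text \<open>Large deviation principle for a sequence of real random variables,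
  given through their laws P n B = P(Z_n \<in> B), with rate function J.\<close>
definition LDP :: "(nat \<Rightarrow> real set \<Rightarrow> real) \<Rightarrow> (real \<Rightarrow> ereal) \<Rightarrow> bool" where
  "LDP P J \<longleftrightarrow>
     (\<forall>t. J t \<ge> 0) \<and>
     (\<forall>c::ereal. open {t. c < J t}) \<and>
     (\<forall>c::real. compact {t. J t \<le> ereal c}) \<and>
     (\<forall>B \<in> sets borel.
        - (INF t\<in>interior B. J t)
          \<le> liminf (\<lambda>n. ereal (1 / real n) * elog (P n B)) \<and>
        liminf (\<lambda>n. ereal (1 / real n) * elog (P n B))
          \<le> limsup (\<lambda>n. ereal (1 / real n) * elog (P n B)) \<and>
        limsup (\<lambda>n. ereal (1 / real n) * elog (P n B))
          \<le> - (INF t\<in>closure B. J t))"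

end

theory Submission
  imports Defs
begin


definition Mz :: "nat \<Rightarrow> (nat\<Rightarrow>real) \<Rightarrow> (nat\<Rightarrow>real) \<Rightarrow> real \<Rightarrow> real" where
  "Mz K a w \<theta> = (\<Sum>k<K. w k * exp (\<theta> * a k))"
definition tlt :: "nat \<Rightarrow> (nat\<Rightarrow>real) \<Rightarrow> (nat\<Rightarrow>real) \<Rightarrow> real \<Rightarrow> nat \<Rightarrow> real" where
  "tlt K a w \<theta> k = w k * exp (\<theta> * a k) / Mz K a w \<theta>"
definition mn :: "nat \<Rightarrow> (nat\<Rightarrow>real) \<Rightarrow> (nat\<Rightarrow>real) \<Rightarrow> real \<Rightarrow> real" where
  "mn K a w \<theta> = (\<Sum>k<K. tlt K a w \<theta> k * a k)"
definition Lam :: "nat \<Rightarrow> (nat\<Rightarrow>real) \<Rightarrow> (nat\<Rightarrow>real) \<Rightarrow> real \<Rightarrow> real" where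
  "Lam K a w \<theta> = ln (Mz K a w \<theta>)"
definition Leg :: "nat \<Rightarrow> (nat\<Rightarrow>real) \<Rightarrow> (nat\<Rightarrow>real) \<Rightarrow> real \<Rightarrow> ereal" where
  "Leg K a w t = (SUP \<theta>. ereal (\<theta> * t - Lam K a w \<theta>))"

lemma conc:
  fixes c g :: "nat \<Rightarrow> real"
  assumes "k0 < K" "c k0 = 0" "\<And>k. k<K \<Longrightarrow> k\<noteq>k0 \<Longrightarrow> c k < 0"
  shows "(\<lambda>n. \<Sum>k<K. g k * exp (real n * c k)) \<longlonglongrightarrow> g k0"
proof -
  have "(\<lambda>n. \<Sum>k<K. g k * exp (real n * c k)) \<longlonglongrightarrow> (\<Sum>k<K. if k = k0 then g k else 0)"
  proof (rule tendsto_sum)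
    fix k assume k: "k \<in> {..<K}"
    show "(\<lambda>n. g k * exp (real n * c k)) \<longlonglongrightarrow> (if k = k0 then g k else 0)"
    proof (cases "k = k0")
      case True then show ?thesis using assms by simp
    next
      case False
      then have "c k < 0" using assms k by auto
      then have "(\<lambda>n. exp (c k) ^ n) \<longlonglongrightarrow> 0"
        by (intro LIMSEQ_realpow_zero) auto
      then have "(\<lambda>n. g k * exp (c k) ^ n) \<longlonglongrightarrow> g k * 0"
        by (intro tendsto_mult) auto
      then show ?thesis using False by (simp add: exp_of_nat_mult)
    qed
  qed
  also have "(\<Sum>k<K. if k = k0 then g k else 0) = g k0" using assms by simp
  finally show ?thesis .
qed

locale core =
  fixes K :: nat and a w :: "nat \<Rightarrow> real" and lo hi :: nat
  assumes wpos: "\<And>k. k<K \<Longrightarrow> 0 < w k" and wsum: "(\<Sum>k<K. w k) = 1"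
    and lo: "lo < K" and hi: "hi < K" and lohi: "lo \<noteq> hi"
    and alo: "\<And>k. k<K \<Longrightarrow> k\<noteq>lo \<Longrightarrow> a lo < a k"
    and ahi: "\<And>k. k<K \<Longrightarrow> k\<noteq>hi \<Longrightarrow> a k < a hi"
begin

lemma alo': "k<K \<Longrightarrow> a lo \<le> a k" using alo[of k] by (cases "k=lo") auto
lemma ahi': "k<K \<Longrightarrow> a k \<le> a hi" using ahi[of k] by (cases "k=hi") auto
lemma Kne: "{..<K} \<noteq> {}" using lo by auto

lemma M_pos: "0 < Mz K a w \<theta>"
  unfolding Mz_def using Kne wpos by (intro sum_pos) auto

lemma tlt_pos: "k<K \<Longrightarrow> 0 < tlt K a w \<theta> k"
  unfolding tlt_def using M_pos wpos by (intro divide_pos_pos) auto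

lemma tlt_sum: "(\<Sum>k<K. tlt K a w \<theta> k) = 1"
  using M_pos[of \<theta>] by (simp add: tlt_def sum_divide_distrib[symmetric] Mz_def[symmetric])

lemma tlt_nn: "k<K \<Longrightarrow> 0 \<le> tlt K a w \<theta> k" using tlt_pos[of k \<theta>] by linarith

lemma Mz0: "Mz K a w 0 = 1" by (simp add: Mz_def wsum)
lemma tl0: "tlt K a w 0 k = w k" by (simp add: tlt_def Mz0)

lemma core_tl: "core K a (tlt K a w \<theta>) lo hi"
  by unfold_locales (use tlt_pos tlt_sum lo hi lohi alo ahi in auto)

lemma Mz_tl: "Mz K a (tlt K a w u) v = Mz K a w (u+v) / Mz K a w u"
proof -
  have "Mz K a (tlt K a w u) v = (\<Sum>k<K. w k * exp ((u+v) * a k) / Mz K a w u)"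
    unfolding Mz_def tlt_def by (intro sum.cong) (auto simp: distrib_right exp_add)
  also have "\<dots> = Mz K a w (u+v) / Mz K a w u"
    unfolding Mz_def by (simp add: sum_divide_distrib)
  finally show ?thesis .
qed

lemma tlt_tl: "tlt K a (tlt K a w u) v k = tlt K a w (u+v) k"
proof -
  have "tlt K a (tlt K a w u) v k = tlt K a w u k * exp (v * a k) / Mz K a (tlt K a w u) v"
    by (rule tlt_def)
  also have "\<dots> = tlt K a w (u+v) k"
    using M_pos[of u] M_pos[of "u+v"] unfolding Mz_tl
    by (simp add: tlt_def distrib_right exp_add field_simps)
  finally show ?thesis .
qed

lemma mn_gt: "a lo < mn K a w \<theta>"
proof -
  have "0 < (\<Sum>k<K. tlt K a w \<theta> k * (a k - a lo))"
    using hi lohi tlt_pos alo' alo[of hi]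
    by (intro sum_pos2[of _ hi]) (auto intro!: mult_nonneg_nonneg tlt_nn)
  also have "\<dots> = mn K a w \<theta> - a lo"
    by (simp add: mn_def right_diff_distrib sum_subtractf sum_distrib_right[symmetric] tlt_sum)
  finally show ?thesis by simp
qed

lemma mn_lt: "mn K a w \<theta> < a hi"
proof -
  have "0 < (\<Sum>k<K. tlt K a w \<theta> k * (a hi - a k))"
    using lo lohi tlt_pos ahi' ahi[of lo]
    by (intro sum_pos2[of _ lo]) (auto intro!: mult_nonneg_nonneg tlt_nn)
  also have "\<dots> = a hi * (\<Sum>k<K. tlt K a w \<theta> k) - mn K a w \<theta>"
    by (simp add: mn_def sum_distrib_left algebra_simps sum_subtractf)
  also have "\<dots> = a hi - mn K a w \<theta>" by (simp add: tlt_sum)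
  finally show ?thesis by simp
qed

lemma mn_shift: "mn K a w \<theta> = (\<Sum>k<K. (w k * a k) * exp (\<theta> * a k - C)) / (\<Sum>k<K. w k * exp (\<theta> * a k - C))"
proof -
  have e: "exp (\<theta> * a k - C) = exp (\<theta> * a k) / exp C" for k by (simp add: exp_diff)
  have "mn K a w \<theta> = (\<Sum>k<K. (w k * a k) * exp (\<theta> * a k)) / Mz K a w \<theta>"
    unfolding mn_def tlt_def by (simp add: sum_divide_distrib algebra_simps)
  also have "\<dots> = ((\<Sum>k<K. (w k * a k) * exp (\<theta> * a k)) / exp C) / (Mz K a w \<theta> / exp C)"
    by simp
  also have "\<dots> = (\<Sum>k<K. (w k * a k) * exp (\<theta> * a k - C)) / (\<Sum>k<K. w k * exp (\<theta> * a k - C))"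
    unfolding e Mz_def by (simp add: sum_divide_distrib)
  finally show ?thesis .
qed

lemma Mz_cont: "continuous_on UNIV (Mz K a w)"
  unfolding Mz_def by (intro continuous_intros)

lemma mn_cont: "continuous_on UNIV (mn K a w)"
proof -
  have "mn K a w = (\<lambda>\<theta>. \<Sum>k<K. w k * exp (\<theta> * a k) / Mz K a w \<theta> * a k)"
    by (intro ext) (simp add: mn_def tlt_def)
  moreover have "continuous_on UNIV (\<lambda>\<theta>. \<Sum>k<K. w k * exp (\<theta> * a k) / Mz K a w \<theta> * a k)"
    using M_pos by (intro continuous_intros Mz_cont) (auto simp: less_imp_neq[symmetric])
  ultimately show ?thesis by simp
qed

lemma mn_mono:
  assumes "\<theta>1 < \<theta>2" shows "mn K a w \<theta>1 < mn K a w \<theta>2"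
proof -
  define e1 where "e1 k = exp (\<theta>1 * a k)" for k
  define e2 where "e2 k = exp (\<theta>2 * a k)" for k
  define g where "g j k = w j * w k * a j * (e2 j * e1 k - e1 j * e2 k)" for j k
  define N1 where "N1 = (\<Sum>k<K. w k * a k * e1 k)"
  define N2 where "N2 = (\<Sum>k<K. w k * a k * e2 k)"
  define M1 where "M1 = (\<Sum>k<K. w k * e1 k)"
  define M2 where "M2 = (\<Sum>k<K. w k * e2 k)"
  have M1: "M1 = Mz K a w \<theta>1" unfolding M1_def Mz_def e1_def ..
  have M2: "M2 = Mz K a w \<theta>2" unfolding M2_def Mz_def e2_def ..
  have mn1: "mn K a w \<theta>1 = N1 / M1"
    unfolding mn_def tlt_def N1_def M1 e1_def by (simp add: sum_divide_distrib algebra_simps)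
  have mn2: "mn K a w \<theta>2 = N2 / M2"
    unfolding mn_def tlt_def N2_def M2 e2_def by (simp add: sum_divide_distrib algebra_simps)
  have D: "N2 * M1 - N1 * M2 = (\<Sum>j<K. \<Sum>k<K. g j k)"
    unfolding N1_def N2_def M1_def M2_def g_def sum_product sum_subtractf[symmetric]
    by (intro sum.cong refl) (simp add: algebra_simps)
  have "(\<Sum>j<K. \<Sum>k<K. g j k) = (\<Sum>j<K. \<Sum>k<K. g k j)" by (rule sum.swap)
  then have "2 * (N2 * M1 - N1 * M2) = (\<Sum>j<K. \<Sum>k<K. g j k + g k j)"
    unfolding D by (simp add: sum.distrib)
  also have "\<dots> = (\<Sum>j<K. \<Sum>k<K. w j * w k * ((a j - a k) * (exp (\<theta>2 * a j + \<theta>1 * a k) - exp (\<theta>1 * a j + \<theta>2 * a k))))"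
    unfolding g_def e1_def e2_def by (intro sum.cong refl) (simp add: exp_add algebra_simps)
  finally have D2: "2 * (N2 * M1 - N1 * M2) = \<dots>" .
  have gnn: "0 \<le> (a j - a k) * (exp (\<theta>2 * a j + \<theta>1 * a k) - exp (\<theta>1 * a j + \<theta>2 * a k))" for j k
  proof (cases "a k \<le> a j")
    case True
    then have "\<theta>1 * a j + \<theta>2 * a k \<le> \<theta>2 * a j + \<theta>1 * a k"
      using assms True mult_nonneg_nonneg[of "\<theta>2-\<theta>1" "a j - a k"] by (simp add: algebra_simps)
    then show ?thesis using True by (intro mult_nonneg_nonneg) auto
  next
    case False
    then have "\<theta>2 * a j + \<theta>1 * a k \<le> \<theta>1 * a j + \<theta>2 * a k"
      using assms False mult_nonneg_nonpos[of "\<theta>2-\<theta>1" "a j - a k"] by (simp add: algebra_simps)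
    then show ?thesis using False by (intro mult_nonpos_nonpos) auto
  qed
  have gpos: "0 < (a hi - a lo) * (exp (\<theta>2 * a hi + \<theta>1 * a lo) - exp (\<theta>1 * a hi + \<theta>2 * a lo))"
  proof -
    have h: "a lo < a hi" using ahi[OF lo] lohi by auto
    then have "\<theta>1 * a hi + \<theta>2 * a lo < \<theta>2 * a hi + \<theta>1 * a lo"
      using assms mult_pos_pos[of "\<theta>2-\<theta>1" "a hi - a lo"] by (simp add: algebra_simps)
    then show ?thesis using h by (intro mult_pos_pos) auto
  qed
  have "0 < (\<Sum>j<K. \<Sum>k<K. w j * w k * ((a j - a k) * (exp (\<theta>2 * a j + \<theta>1 * a k) - exp (\<theta>1 * a j + \<theta>2 * a k))))"
  proof (rule sum_pos2[of _ hi])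
    show "0 < (\<Sum>k<K. w hi * w k * ((a hi - a k) * (exp (\<theta>2 * a hi + \<theta>1 * a k) - exp (\<theta>1 * a hi + \<theta>2 * a k))))"
    proof (rule sum_pos2[of _ lo])
      show "0 < w hi * w lo * ((a hi - a lo) * (exp (\<theta>2 * a hi + \<theta>1 * a lo) - exp (\<theta>1 * a hi + \<theta>2 * a lo)))"
        using gpos wpos[OF lo] wpos[OF hi] by simp
      show "0 \<le> w hi * w i * ((a hi - a i) * (exp (\<theta>2 * a hi + \<theta>1 * a i) - exp (\<theta>1 * a hi + \<theta>2 * a i)))"
        if "i \<in> {..<K}" for i
        using that wpos[of i] wpos[OF hi] by (intro mult_nonneg_nonneg gnn) auto
    qed (use lo in auto)
    show "0 \<le> (\<Sum>k<K. w j * w k * ((a j - a k) * (exp (\<theta>2 * a j + \<theta>1 * a k) - exp (\<theta>1 * a j + \<theta>2 * a k))))" if "j \<in> {..<K}" for j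
      using that wpos by (intro sum_nonneg mult_nonneg_nonneg gnn) (auto simp: less_imp_le)
  qed (use hi in auto)
  then have "0 < 2 * (N2 * M1 - N1 * M2)" unfolding D2 .
  then have "N1 * M2 < N2 * M1" by simp
  moreover have "0 < M1" "0 < M2" using M1 M2 M_pos by auto
  ultimately show ?thesis unfolding mn1 mn2 by (simp add: divide_simps mult.commute)
qed

lemma mn_top: "(\<lambda>n. mn K a w (real n)) \<longlonglongrightarrow> a hi"
proof -
  have eq: "mn K a w (real n) = (\<Sum>k<K. (w k * a k) * exp (real n * (a k - a hi))) / (\<Sum>k<K. w k * exp (real n * (a k - a hi)))" for n
    using mn_shift[of "real n" "real n * a hi"] by (simp add: right_diff_distrib)
  have "(\<lambda>n. (\<Sum>k<K. (w k * a k) * exp (real n * (a k - a hi))) / (\<Sum>k<K. w k * exp (real n * (a k - a hi)))) \<longlonglongrightarrow> (w hi * a hi) / w hi"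
    using hi ahi wpos[OF hi] by (intro tendsto_divide conc) auto
  then show ?thesis unfolding eq using wpos[OF hi] by simp
qed

end

lemma (in core) refl_core: "core K (\<lambda>k. - a k) w hi lo"
  by unfold_locales (use wpos wsum lo hi lohi alo ahi in auto)

lemma mn_neg: "mn K (\<lambda>k. - a k) w \<theta> = - mn K a w (- \<theta>)"
proof -
  have "Mz K (\<lambda>k. - a k) w \<theta> = Mz K a w (-\<theta>)" unfolding Mz_def by simp
  then show ?thesis unfolding mn_def tlt_def by (simp add: sum_negf[symmetric])
qed

context core begin

lemma mn_bot: "(\<lambda>n. mn K a w (- real n)) \<longlonglongrightarrow> a lo"
proof -
  interpret r: core K "\<lambda>k. - a k" w hi lo by (rule refl_core)
  have "(\<lambda>n. - mn K (\<lambda>k. - a k) w (real n)) \<longlonglongrightarrow> - (- a lo)"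
    using r.mn_top by (intro tendsto_minus) simp
  then show ?thesis by (simp add: mn_neg)
qed

lemma mn_surj:
  assumes "a lo < t" "t < a hi" shows "\<exists>\<theta>. mn K a w \<theta> = t"
proof -
  have "\<forall>\<^sub>F n in sequentially. t < mn K a w (real n)"
    using mn_top assms(2) by (rule order_tendstoD)
  then obtain n1 where n1: "t < mn K a w (real n1)" by (auto dest: eventually_happens)
  have "\<forall>\<^sub>F n in sequentially. mn K a w (- real n) < t"
    using mn_bot assms(1) by (rule order_tendstoD)
  then obtain n2 where n2: "mn K a w (- real n2) < t" by (auto dest: eventually_happens)
  have "\<exists>x. - real n2 \<le> x \<and> x \<le> real n1 \<and> mn K a w x = t"
    using n1 n2 by (intro IVT' continuous_on_subset[OF mn_cont]) auto
  then show ?thesis by blast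
qed

lemma mn_inj: "mn K a w x = mn K a w y \<Longrightarrow> x = y"
  using mn_mono[of x y] mn_mono[of y x] by (cases x y rule: linorder_cases) auto

end


context core begin

lemma Mz_ratio: "Mz K a w \<theta>' / Mz K a w \<theta> = (\<Sum>k<K. tlt K a w \<theta> k * exp ((\<theta>' - \<theta>) * a k))"
proof -
  have "(\<Sum>k<K. tlt K a w \<theta> k * exp ((\<theta>' - \<theta>) * a k)) = (\<Sum>k<K. w k * exp (\<theta>' * a k) / Mz K a w \<theta>)"
    unfolding tlt_def by (intro sum.cong refl) (simp add: left_diff_distrib exp_diff)
  then show ?thesis unfolding Mz_def by (simp add: sum_divide_distrib)
qed

lemma gibbs:
  assumes "mn K a w \<theta> = t"
  shows "\<theta>' * t - Lam K a w \<theta>' \<le> \<theta> * t - Lam K a w \<theta>"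
proof -
  define c where "c = \<theta>' - \<theta>"
  have "exp (c * t) = (\<Sum>k<K. tlt K a w \<theta> k * (exp (c * t) * (1 + c * (a k - t))))"
  proof -
    have "(\<Sum>k<K. tlt K a w \<theta> k * (exp (c * t) * (1 + c * (a k - t))))
        = exp (c * t) * ((\<Sum>k<K. tlt K a w \<theta> k) + c * (\<Sum>k<K. tlt K a w \<theta> k * a k) - c * t * (\<Sum>k<K. tlt K a w \<theta> k))"
      by (simp add: sum_distrib_left sum.distrib sum_subtractf algebra_simps)
    also have "\<dots> = exp (c * t)" using assms by (simp add: tlt_sum mn_def[symmetric])
    finally show ?thesis by simp
  qed
  also have "\<dots> \<le> (\<Sum>k<K. tlt K a w \<theta> k * exp (c * a k))"
  proof (intro sum_mono mult_left_mono)
    fix k assume k: "k \<in> {..<K}"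
    have "exp (c * t) * (1 + c * (a k - t)) \<le> exp (c * t) * exp (c * (a k - t))"
      by (intro mult_left_mono) auto
    also have "\<dots> = exp (c * a k)" by (simp add: exp_add[symmetric] algebra_simps)
    finally show "exp (c * t) * (1 + c * (a k - t)) \<le> exp (c * a k)" .
    show "0 \<le> tlt K a w \<theta> k" using k tlt_nn by auto
  qed
  also have "\<dots> = Mz K a w \<theta>' / Mz K a w \<theta>" unfolding Mz_ratio c_def ..
  finally have "exp (c * t) \<le> Mz K a w \<theta>' / Mz K a w \<theta>" .
  then have "c * t \<le> ln (Mz K a w \<theta>' / Mz K a w \<theta>)"
    using M_pos by (simp add: ln_ge_iff)
  then have "c * t \<le> Lam K a w \<theta>' - Lam K a w \<theta>"
    using M_pos[of \<theta>] M_pos[of \<theta>'] by (simp add: Lam_def ln_div)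
  then show ?thesis unfolding c_def by (simp add: algebra_simps)
qed

lemma KL_tlt: "KL K (tlt K a w \<theta>) w = \<theta> * mn K a w \<theta> - Lam K a w \<theta>"
proof -
  have "KL K (tlt K a w \<theta>) w = (\<Sum>k<K. tlt K a w \<theta> k * (\<theta> * a k - Lam K a w \<theta>))"
    unfolding KL_def
  proof (intro sum.cong refl)
    fix k assume k: "k \<in> {..<K}"
    have "tlt K a w \<theta> k / w k = exp (\<theta> * a k) / Mz K a w \<theta>"
      using wpos[of k] k by (simp add: tlt_def)
    then have "ln (tlt K a w \<theta> k / w k) = \<theta> * a k - Lam K a w \<theta>"
      using M_pos[of \<theta>] by (simp add: ln_div Lam_def)
    then show "tlt K a w \<theta> k * ln (tlt K a w \<theta> k / w k) = tlt K a w \<theta> k * (\<theta> * a k - Lam K a w \<theta>)"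
      by simp
  qed
  also have "\<dots> = \<theta> * mn K a w \<theta> - Lam K a w \<theta>"
    by (simp add: right_diff_distrib sum_subtractf sum_distrib_left[symmetric] sum_distrib_right[symmetric] tlt_sum mn_def algebra_simps)
  finally show ?thesis .
qed

lemma Lam0: "Lam K a w 0 = 0" by (simp add: Lam_def Mz0)

lemma Leg_int: assumes "mn K a w \<theta> = t" shows "Leg K a w t = ereal (\<theta> * t - Lam K a w \<theta>)"
  unfolding Leg_def
  by (intro antisym SUP_least SUP_upper2[of \<theta>]) (use gibbs[OF assms] in auto)

lemma Leg_nonneg: "0 \<le> Leg K a w t"
  unfolding Leg_def by (intro SUP_upper2[of 0]) (auto simp: Lam0)

lemma Leg_mu: "Leg K a w (mn K a w 0) = 0"
  using Leg_int[of 0] by (simp add: Lam0 zero_ereal_def)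

lemma Lam_lo: "\<theta> * a lo - Lam K a w \<theta> \<le> - ln (w lo)"
proof -
  have "w lo * exp (\<theta> * a lo) \<le> Mz K a w \<theta>"
    unfolding Mz_def using lo wpos by (intro member_le_sum) (auto intro: less_imp_le)
  then have "ln (w lo * exp (\<theta> * a lo)) \<le> Lam K a w \<theta>"
    unfolding Lam_def using wpos[OF lo] by (subst ln_le_cancel_iff) (auto intro: M_pos)
  then show ?thesis using wpos[OF lo] by (simp add: ln_mult)
qed

lemma Leg_lo: "Leg K a w (a lo) = ereal (- ln (w lo))"
proof (rule antisym)
  show "Leg K a w (a lo) \<le> ereal (- ln (w lo))"
    unfolding Leg_def by (intro SUP_least) (use Lam_lo in auto)
  have eq: "- real n * a lo - Lam K a w (- real n) = - ln (\<Sum>k<K. w k * exp (real n * (a lo - a k)))" for n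
  proof -
    have "Mz K a w (- real n) = (\<Sum>k<K. w k * exp (real n * (a lo - a k))) * exp (- real n * a lo)"
      unfolding Mz_def sum_distrib_right
      by (intro sum.cong refl) (simp add: exp_add[symmetric] algebra_simps)
    moreover have "0 < (\<Sum>k<K. w k * exp (real n * (a lo - a k)))"
      using Kne wpos by (intro sum_pos) auto
    ultimately show ?thesis unfolding Lam_def by (simp add: ln_mult)
  qed
  have "(\<lambda>n. \<Sum>k<K. w k * exp (real n * (a lo - a k))) \<longlonglongrightarrow> w lo"
    using lo alo by (intro conc) auto
  then have "(\<lambda>n. - ln (\<Sum>k<K. w k * exp (real n * (a lo - a k)))) \<longlonglongrightarrow> - ln (w lo)"
    using wpos[OF lo] by (intro tendsto_intros) auto
  then have "(\<lambda>n. ereal (- real n * a lo - Lam K a w (- real n))) \<longlonglongrightarrow> ereal (- ln (w lo))"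
    unfolding eq by (rule tendsto_ereal)
  then show "ereal (- ln (w lo)) \<le> Leg K a w (a lo)"
    by (rule tendsto_upperbound) (auto simp: Leg_def intro!: always_eventually SUP_upper2[where i="- real _"])
qed

lemma Leg_below: assumes "t < a lo" shows "Leg K a w t = \<infinity>"
  unfolding Leg_def
proof (rule SUP_PInfty)
  fix n :: nat
  define \<theta> where "\<theta> = - real n / (a lo - t)"
  have th: "\<theta> \<le> 0" using assms by (simp add: \<theta>_def divide_nonneg_pos)
  have "Mz K a w \<theta> \<le> (\<Sum>k<K. w k * exp (\<theta> * a lo))"
    unfolding Mz_def
  proof (intro sum_mono mult_left_mono)
    fix k assume "k \<in> {..<K}"
    then show "exp (\<theta> * a k) \<le> exp (\<theta> * a lo)" "0 \<le> w k"
      using th alo'[of k] wpos[of k] by (auto intro: mult_left_mono_neg)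
  qed
  also have "\<dots> = exp (\<theta> * a lo)" by (simp add: sum_distrib_right[symmetric] wsum)
  finally have "ln (Mz K a w \<theta>) \<le> ln (exp (\<theta> * a lo))"
    using M_pos[of \<theta>] by (subst ln_le_cancel_iff) auto
  then have "Lam K a w \<theta> \<le> \<theta> * a lo" unfolding Lam_def by simp
  then have "\<theta> * (t - a lo) \<le> \<theta> * t - Lam K a w \<theta>" by (simp add: algebra_simps)
  moreover have "\<theta> * (t - a lo) = real n" using assms by (simp add: \<theta>_def field_simps)
  ultimately show "\<exists>i\<in>UNIV. ereal (real n) \<le> ereal (i * t - Lam K a w i)" by auto
qed

end

lemma Lam_neg: "Lam K (\<lambda>k. - a k) w \<theta> = Lam K a w (- \<theta>)"
  unfolding Lam_def Mz_def by simp

lemma Leg_neg: "Leg K (\<lambda>k. - a k) w (- t) = Leg K a w t"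
  unfolding Leg_def Lam_neg
  by (intro antisym SUP_least) (auto intro: SUP_upper2[where i="- _"])

context core begin

lemma Leg_hi: "Leg K a w (a hi) = ereal (- ln (w hi))"
proof -
  interpret r: core K "\<lambda>k. - a k" w hi lo by (rule refl_core)
  show ?thesis using r.Leg_lo Leg_neg[of K a w "a hi"] by simp
qed

lemma Leg_above: "a hi < t \<Longrightarrow> Leg K a w t = \<infinity>"
proof -
  assume t: "a hi < t"
  interpret r: core K "\<lambda>k. - a k" w hi lo by (rule refl_core)
  show ?thesis using r.Leg_below[of "-t"] t Leg_neg[of K a w t] by simp
qed

end


lemma Leg_open: "open {t. c < Leg K a w t}"
proof -
  have "{t. c < Leg K a w t} = (\<Union>\<theta>. {t. c < ereal (\<theta> * t - Lam K a w \<theta>)})"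
    by (auto simp: Leg_def less_SUP_iff)
  also have "open \<dots>"
    by (intro open_UN ballI open_Collect_less continuous_intros)
  finally show ?thesis .
qed

lemma (in core) Leg_compact: "compact {t. Leg K a w t \<le> ereal c}"
proof -
  have "{t. Leg K a w t \<le> ereal c} = - {t. ereal c < Leg K a w t}" by auto
  then have cl: "closed {t. Leg K a w t \<le> ereal c}" using Leg_open by (simp add: closed_def)
  have "{t. Leg K a w t \<le> ereal c} \<subseteq> {a lo..a hi}"
  proof
    fix t assume "t \<in> {t. Leg K a w t \<le> ereal c}"
    then show "t \<in> {a lo..a hi}" using Leg_below[of t] Leg_above[of t] by (auto simp: not_less[symmetric])
  qed
  then have "bounded {t. Leg K a w t \<le> ereal c}" by (rule bounded_subset[OF bounded_closed_interval])
  then show ?thesis using cl by (simp add: compact_eq_bounded_closed)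
qed

definition Pr :: "nat \<Rightarrow> (nat\<Rightarrow>real) \<Rightarrow> (nat\<Rightarrow>real) \<Rightarrow> nat \<Rightarrow> real set \<Rightarrow> real" where
  "Pr K a w m S = (\<Sum>y\<in>PiE {..<m} (\<lambda>_. {..<K}). if (\<Sum>i<m. a (y i)) / real m \<in> S then (\<Prod>i<m. w (y i)) else 0)"

lemma finPi: "finite (PiE {..<m::nat} (\<lambda>_. {..<K::nat}))" by (intro finite_PiE) auto

context core begin

lemma prod_nn: "y \<in> PiE {..<m} (\<lambda>_. {..<K}) \<Longrightarrow> 0 \<le> (\<Prod>i<m. w (y i))"
  by (intro prod_nonneg) (auto simp: PiE_iff intro: less_imp_le wpos)

lemma Pr_total: "(\<Sum>y\<in>PiE {..<m::nat} (\<lambda>_. {..<K}). \<Prod>i<m. w (y i)) = 1"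
  using prod_sum_PiE[of "{..<m}" "\<lambda>_. {..<K}" "\<lambda>i k. w k"] by (simp add: wsum)

lemma Pr_nn: "0 \<le> Pr K a w m S"
  unfolding Pr_def using prod_nn by (intro sum_nonneg) auto

lemma Pr_mono: "S \<subseteq> T \<Longrightarrow> Pr K a w m S \<le> Pr K a w m T"
  unfolding Pr_def using prod_nn by (intro sum_mono) auto

lemma Pr_le1: "Pr K a w m S \<le> 1"
proof -
  have "Pr K a w m S \<le> Pr K a w m UNIV" by (rule Pr_mono) auto
  also have "\<dots> = 1" unfolding Pr_def using Pr_total by simp
  finally show ?thesis .
qed

lemma Pr_Un: "Pr K a w m (S \<union> T) \<le> Pr K a w m S + Pr K a w m T"
  unfolding Pr_def sum.distrib[symmetric] using prod_nn by (intro sum_mono) auto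

lemma Pr_compl: "Pr K a w m (- S) = 1 - Pr K a w m S"
proof -
  have "Pr K a w m (- S) + Pr K a w m S = 1"
    unfolding Pr_def sum.distrib[symmetric] by (subst Pr_total[symmetric, of m]) (intro sum.cong, auto)
  then show ?thesis by simp
qed

lemma Pr_single:
  assumes "k0 < K" "a k0 \<in> S" "0 < m"
  shows "w k0 ^ m \<le> Pr K a w m S"
proof -
  define y0 where "y0 = restrict (\<lambda>_. k0) {..<m}"
  have y0: "y0 \<in> PiE {..<m} (\<lambda>_. {..<K})" using assms by (simp add: y0_def)
  have "(\<Sum>i<m. a (y0 i)) / real m = a k0" using assms by (simp add: y0_def)
  then have "w k0 ^ m = (if (\<Sum>i<m. a (y0 i)) / real m \<in> S then (\<Prod>i<m. w (y0 i)) else 0)"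
    using assms by (simp add: y0_def)
  also have "\<dots> \<le> Pr K a w m S"
    unfolding Pr_def using y0 prod_nn by (intro member_le_sum[OF y0]) (auto intro: finPi)
  finally show ?thesis .
qed

lemma chernoff:
  assumes "0 < m"
    and ev: "\<And>y. y \<in> PiE {..<m} (\<lambda>_. {..<K}) \<Longrightarrow> (\<Sum>i<m. a (y i)) / real m \<in> S \<Longrightarrow> 0 \<le> \<theta> * ((\<Sum>i<m. a (y i)) / real m - s)"
  shows "Pr K a w m S \<le> exp (- real m * (\<theta> * s - Lam K a w \<theta>))"
proof -
  have "Pr K a w m S \<le> (\<Sum>y\<in>PiE {..<m} (\<lambda>_. {..<K}). \<Prod>i<m. w (y i) * exp (\<theta> * (a (y i) - s)))"
    unfolding Pr_def
  proof (intro sum_mono)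
    fix y assume y: "y \<in> PiE {..<m} (\<lambda>_. {..<K})"
    have eq: "(\<Prod>i<m. w (y i) * exp (\<theta> * (a (y i) - s))) = (\<Prod>i<m. w (y i)) * exp (\<theta> * (\<Sum>i<m. a (y i)) - real m * \<theta> * s)"
      by (simp add: prod.distrib exp_sum[symmetric] sum_distrib_left right_diff_distrib sum_subtractf)
    show "(if (\<Sum>i<m. a (y i)) / real m \<in> S then (\<Prod>i<m. w (y i)) else 0) \<le> (\<Prod>i<m. w (y i) * exp (\<theta> * (a (y i) - s)))"
    proof (cases "(\<Sum>i<m. a (y i)) / real m \<in> S")
      case True
      then have "0 \<le> \<theta> * ((\<Sum>i<m. a (y i)) / real m - s)" using ev y by auto
      then have "0 \<le> real m * (\<theta> * ((\<Sum>i<m. a (y i)) / real m - s))" by simp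
      moreover have "real m * (\<theta> * ((\<Sum>i<m. a (y i)) / real m - s)) = \<theta> * (\<Sum>i<m. a (y i)) - real m * \<theta> * s"
        using assms by (simp add: field_simps)
      ultimately have "0 \<le> \<theta> * (\<Sum>i<m. a (y i)) - real m * \<theta> * s" by linarith
      then have "1 \<le> exp (\<theta> * (\<Sum>i<m. a (y i)) - real m * \<theta> * s)" by simp
      then show ?thesis using True prod_nn[OF y] unfolding eq
        by (simp add: mult_le_cancel_left1)
    next
      case False
      then show ?thesis using prod_nn[OF y] unfolding eq by simp
    qed
  qed
  also have "\<dots> = (\<Prod>i<m. \<Sum>k<K. w k * exp (\<theta> * (a k - s)))"
    by (rule prod_sum_PiE[symmetric]) auto
  also have "\<dots> = (Mz K a w \<theta> * exp (- \<theta> * s)) ^ m"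
    unfolding Mz_def sum_distrib_right by (simp add: exp_add[symmetric] algebra_simps)
  also have "\<dots> = exp (- real m * (\<theta> * s - Lam K a w \<theta>))"
  proof -
    have "Mz K a w \<theta> ^ m = exp (real m * Lam K a w \<theta>)"
      using M_pos[of \<theta>] by (simp add: Lam_def exp_of_nat_mult)
    then show ?thesis by (simp add: power_mult_distrib exp_of_nat_mult[symmetric] exp_add[symmetric] algebra_simps)
  qed
  finally show ?thesis .
qed

lemma change_measure:
  assumes y: "y \<in> PiE {..<m} (\<lambda>_. {..<K})"
  shows "(\<Prod>i<m. w (y i)) = (\<Prod>i<m. tlt K a w \<theta> (y i)) * exp (real m * Lam K a w \<theta> - \<theta> * (\<Sum>i<m. a (y i)))"
proof -
  have "w k = tlt K a w \<theta> k * (exp (Lam K a w \<theta>) * exp (- \<theta> * a k))" if "k < K" for k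
    using M_pos[of \<theta>] by (simp add: tlt_def Lam_def exp_minus field_simps)
  then have "(\<Prod>i<m. w (y i)) = (\<Prod>i<m. tlt K a w \<theta> (y i) * (exp (Lam K a w \<theta>) * exp (- \<theta> * a (y i))))"
    using y by (intro prod.cong) (auto simp: PiE_iff)
  also have "\<dots> = (\<Prod>i<m. tlt K a w \<theta> (y i)) * exp (real m * Lam K a w \<theta> - \<theta> * (\<Sum>i<m. a (y i)))"
  proof -
    have "(\<Prod>i<m. tlt K a w \<theta> (y i) * (exp (Lam K a w \<theta>) * exp (- \<theta> * a (y i))))
       = (\<Prod>i<m. tlt K a w \<theta> (y i)) * (exp (Lam K a w \<theta>) ^ m * exp (\<Sum>i<m. - \<theta> * a (y i)))"
      by (simp add: prod.distrib exp_sum)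
    also have "exp (Lam K a w \<theta>) ^ m * exp (\<Sum>i<m. - \<theta> * a (y i)) = exp (real m * Lam K a w \<theta> - \<theta> * (\<Sum>i<m. a (y i)))"
      by (simp add: exp_of_nat_mult[symmetric] exp_add[symmetric] sum_distrib_left sum_negf)
    finally show ?thesis .
  qed
  finally show ?thesis .
qed

end


lemma elog_up:
  assumes "0 < n" "P \<le> exp (real n * y)"
  shows "ereal (1 / real n) * elog P \<le> ereal y"
proof (cases "P \<le> 0")
  case True
  then show ?thesis using assms by (simp add: elog_def)
next
  case False
  then have "ln P \<le> real n * y" using assms by (metis ln_exp ln_le_cancel_iff exp_gt_zero not_le)
  then have "ln P / real n \<le> y" using assms by (simp add: divide_simps mult.commute)
  then show ?thesis using False by (simp add: elog_def)
qed

lemma elog_low: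
  assumes "0 < n" "exp (real n * y) \<le> P"
  shows "ereal y \<le> ereal (1 / real n) * elog P"
proof -
  have P: "0 < P" using assms(2) by (smt (verit) exp_gt_zero)
  then have "real n * y \<le> ln P" using assms by (metis ln_exp ln_le_cancel_iff exp_gt_zero)
  then have "y \<le> ln P / real n" using assms by (simp add: divide_simps mult.commute)
  then show ?thesis using P by (simp add: elog_def)
qed

lemma le_uminus_INF_ereal:
  fixes l c :: ereal
  assumes "\<And>x. ereal x < c \<Longrightarrow> l \<le> - ereal x"
  shows "l \<le> - c"
proof -
  have "c \<le> - l"
  proof (rule dense_le)
    fix z assume z: "z < c"
    show "z \<le> - l"
    proof (cases z)
      case (real x)
      then have "l \<le> - ereal x" using assms z by simp
      then show ?thesis using real by (metis ereal_minus_le_minus ereal_uminus_uminus)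
    qed (use z in auto)
  qed
  then show ?thesis by (metis ereal_minus_le_minus ereal_uminus_uminus)
qed

lemma lim_ln2: "(\<lambda>n. ereal (ln 2 / real n - x)) \<longlonglongrightarrow> ereal (- x)"
proof -
  have "(\<lambda>n. ln 2 * inverse (real n) - x) \<longlonglongrightarrow> ln 2 * 0 - x"
    by (intro tendsto_intros lim_inverse_n)
  then show ?thesis by (intro tendsto_ereal) (simp add: divide_inverse)
qed

context core begin

lemma Pr_empty: "Pr K a w m {} = 0" by (simp add: Pr_def)

lemma upper_half:
  assumes F: "closed F" and m: "0 < m" and x: "ereal x < (INF t\<in>F. Leg K a w t)"
  shows "Pr K a w m (F \<inter> {mn K a w 0..}) \<le> exp (- real m * x)"
proof (cases "F \<inter> {mn K a w 0..} = {}")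
  case True then show ?thesis by (simp add: Pr_empty)
next
  case False
  define s where "s = Inf (F \<inter> {mn K a w 0..})"
  have bdd: "bdd_below (F \<inter> {mn K a w 0..})" by (rule bdd_belowI[of _ "mn K a w 0"]) auto
  have sF: "s \<in> F \<inter> {mn K a w 0..}" unfolding s_def
    using False bdd F by (intro closed_contains_Inf closed_Int) auto
  then have "(INF t\<in>F. Leg K a w t) \<le> Leg K a w s" by (intro INF_lower) auto
  then have "ereal x < Leg K a w s" using x by simp
  then obtain \<theta> where th: "x < \<theta> * s - Lam K a w \<theta>" by (auto simp: Leg_def less_SUP_iff)
  show ?thesis
  proof (cases "0 \<le> \<theta>")
    case True
    have "Pr K a w m (F \<inter> {mn K a w 0..}) \<le> exp (- real m * (\<theta> * s - Lam K a w \<theta>))"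
    proof (rule chernoff[OF m])
      fix y assume "(\<Sum>i<m. a (y i)) / real m \<in> F \<inter> {mn K a w 0..}"
      then have "s \<le> (\<Sum>i<m. a (y i)) / real m" unfolding s_def using bdd by (intro cInf_lower)
      then show "0 \<le> \<theta> * ((\<Sum>i<m. a (y i)) / real m - s)" using True by simp
    qed
    also have "\<dots> \<le> exp (- real m * x)" using th m by simp
    finally show ?thesis .
  next
    case False
    have "\<theta> * mn K a w 0 - Lam K a w \<theta> \<le> 0 * mn K a w 0 - Lam K a w 0" by (rule gibbs) simp
    moreover have "\<theta> * s \<le> \<theta> * mn K a w 0" using False sF by (intro mult_left_mono_neg) auto
    ultimately have "x < 0" using th by (simp add: Lam0)
    then have "0 \<le> - real m * x" using m by (simp add: mult_nonneg_nonpos)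
    then have "1 \<le> exp (- real m * x)" by simp
    then show ?thesis using Pr_le1 by (rule order.trans[rotated])
  qed
qed

end

lemma Pr_neg: "Pr K (\<lambda>k. - a k) w m (uminus ` S) = Pr K a w m S"
  unfolding Pr_def by (intro sum.cong refl) (auto simp: sum_negf image_iff intro: bexI[of _ "- _"])

lemma INF_neg: "(INF t\<in>uminus ` F. Leg K (\<lambda>k. - a k) w t) = (INF t\<in>F. Leg K a w t)"
  by (simp add: image_image Leg_neg)

context core begin

lemma upper_bound:
  assumes F: "closed F"
  shows "limsup (\<lambda>n. ereal (1 / real n) * elog (Pr K a w n F)) \<le> - (INF t\<in>F. Leg K a w t)"
proof (rule le_uminus_INF_ereal)
  fix x assume x: "ereal x < (INF t\<in>F. Leg K a w t)"
  interpret r: core K "\<lambda>k. - a k" w hi lo by (rule refl_core)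
  have "ereal (1 / real n) * elog (Pr K a w n F) \<le> ereal (ln 2 / real n - x)" if n: "0 < n" for n
  proof (rule elog_up[OF n])
    have u1: "Pr K a w n (F \<inter> {mn K a w 0..}) \<le> exp (- real n * x)"
      by (rule upper_half[OF F n x])
    have "Pr K a w n (F \<inter> {..mn K a w 0}) = Pr K (\<lambda>k. - a k) w n (uminus ` F \<inter> {mn K (\<lambda>k. - a k) w 0..})"
      unfolding Pr_neg[symmetric, of _ _ _ _ "F \<inter> {..mn K a w 0}"]
      by (intro arg_cong[where f="Pr K (\<lambda>k. - a k) w n"]) (auto simp: mn_neg image_iff intro: bexI[of _ "- _"])
    also have "\<dots> \<le> exp (- real n * x)"
      using x by (intro r.upper_half closed_negations F n) (simp add: INF_neg)
    finally have u2: "Pr K a w n (F \<inter> {..mn K a w 0}) \<le> exp (- real n * x)" .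
    have "Pr K a w n F \<le> Pr K a w n ((F \<inter> {mn K a w 0..}) \<union> (F \<inter> {..mn K a w 0}))"
      by (intro Pr_mono) auto
    also have "\<dots> \<le> Pr K a w n (F \<inter> {mn K a w 0..}) + Pr K a w n (F \<inter> {..mn K a w 0})" by (rule Pr_Un)
    also have "\<dots> \<le> 2 * exp (- real n * x)" using u1 u2 by simp
    also have "\<dots> = exp (real n * (ln 2 / real n - x))"
    proof -
      have "real n * (ln 2 / real n - x) = ln 2 + (- real n * x)" using n by (simp add: field_simps)
      then show ?thesis by (simp only: exp_add exp_ln_iff) simp
    qed
    finally show "Pr K a w n F \<le> exp (real n * (ln 2 / real n - x))" .
  qed
  then have "eventually (\<lambda>n. ereal (1 / real n) * elog (Pr K a w n F) \<le> ereal (ln 2 / real n - x)) sequentially"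
    by (intro eventually_sequentiallyI[of 1]) auto
  then have "limsup (\<lambda>n. ereal (1 / real n) * elog (Pr K a w n F)) \<le> limsup (\<lambda>n. ereal (ln 2 / real n - x))"
    by (rule Limsup_mono)
  also have "\<dots> = ereal (- x)" by (intro lim_imp_Limsup lim_ln2) simp
  finally show "limsup (\<lambda>n. ereal (1 / real n) * elog (Pr K a w n F)) \<le> - ereal x" by simp
qed

end



context core begin

lemma deriv_Lam: "((\<lambda>\<theta>. Lam K a w \<theta> - \<theta> * s) has_real_derivative (mn K a w 0 - s)) (at 0)"
proof -
  have "((\<lambda>\<theta>. ln (\<Sum>k<K. w k * exp (\<theta> * a k)) - \<theta> * s) has_real_derivative
      ((\<Sum>k<K. w k * (exp (0 * a k) * a k)) / (\<Sum>k<K. w k * exp (0 * a k)) - s)) (at 0)"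
    using M_pos[of 0] unfolding Mz_def
    by (auto intro!: derivative_eq_intros sum.cong simp: mult.commute)
  moreover have "mn K a w 0 = (\<Sum>k<K. w k * (exp (0 * a k) * a k)) / (\<Sum>k<K. w k * exp (0 * a k))"
    by (simp add: mn_def tl0 wsum)
  ultimately show ?thesis unfolding Lam_def Mz_def by simp
qed

lemma pos_rate_above:
  assumes "mn K a w 0 < s" shows "\<exists>\<theta>>0. 0 < \<theta> * s - Lam K a w \<theta>"
proof -
  obtain d where d: "d > 0" "\<And>h. h > 0 \<Longrightarrow> h < d \<Longrightarrow> Lam K a w 0 - 0 * s > Lam K a w (0 + h) - (0 + h) * s"
    using DERIV_neg_dec_right[OF deriv_Lam, of s] assms by auto
  have "Lam K a w (d/2) - (d/2) * s < 0" using d(2)[of "d/2"] d(1) by (simp add: Lam0)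
  then show ?thesis using d(1) by (intro exI[of _ "d/2"]) auto
qed

end

context core begin

lemma pos_rate_below:
  assumes "s < mn K a w 0" shows "\<exists>\<theta><0. 0 < \<theta> * s - Lam K a w \<theta>"
proof -
  interpret r: core K "\<lambda>k. - a k" w hi lo by (rule refl_core)
  have "mn K (\<lambda>k. - a k) w 0 < - s" using assms by (simp add: mn_neg)
  then obtain \<theta> where "\<theta> > 0" "0 < \<theta> * (- s) - Lam K (\<lambda>k. - a k) w \<theta>"
    using r.pos_rate_above by blast
  then show ?thesis by (intro exI[of _ "- \<theta>"]) (simp add: Lam_neg)
qed

lemma Pr_tilt_lower:
  assumes n: "0 < n"
  shows "exp (- real n * (\<theta> * t - Lam K a w \<theta> + \<bar>\<theta>\<bar> * \<epsilon>)) * Pr K a (tlt K a w \<theta>) n {t-\<epsilon><..<t+\<epsilon>}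
     \<le> Pr K a w n {t-\<epsilon><..<t+\<epsilon>}"
  unfolding Pr_def sum_distrib_left
proof (intro sum_mono)
  fix y assume y: "y \<in> PiE {..<n} (\<lambda>_. {..<K})"
  interpret v: core K a "tlt K a w \<theta>" lo hi by (rule core_tl)
  define Z where "Z = (\<Sum>i<n. a (y i)) / real n"
  have SZ: "(\<Sum>i<n. a (y i)) = real n * Z" unfolding Z_def using n by simp
  show "exp (- real n * (\<theta> * t - Lam K a w \<theta> + \<bar>\<theta>\<bar> * \<epsilon>)) *
         (if (\<Sum>i<n. a (y i)) / real n \<in> {t - \<epsilon><..<t + \<epsilon>} then \<Prod>i<n. tlt K a w \<theta> (y i) else 0)
       \<le> (if (\<Sum>i<n. a (y i)) / real n \<in> {t - \<epsilon><..<t + \<epsilon>} then \<Prod>i<n. w (y i) else 0)"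
  proof (cases "Z \<in> {t - \<epsilon><..<t + \<epsilon>}")
    case True
    have "\<bar>\<theta> * (Z - t)\<bar> \<le> \<bar>\<theta>\<bar> * \<epsilon>"
      unfolding abs_mult using True by (intro mult_left_mono) auto
    then have "\<theta> * (Z - t) \<le> \<bar>\<theta>\<bar> * \<epsilon>" by linarith
    then have "real n * (\<theta> * (Z - t)) \<le> real n * (\<bar>\<theta>\<bar> * \<epsilon>)" by (intro mult_left_mono) auto
    then have "- real n * (\<theta> * t - Lam K a w \<theta> + \<bar>\<theta>\<bar> * \<epsilon>) \<le> real n * Lam K a w \<theta> - \<theta> * (\<Sum>i<n. a (y i))"
      unfolding SZ by (simp add: algebra_simps)
    then have "exp (- real n * (\<theta> * t - Lam K a w \<theta> + \<bar>\<theta>\<bar> * \<epsilon>)) \<le> exp (real n * Lam K a w \<theta> - \<theta> * (\<Sum>i<n. a (y i)))"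
      by (simp only: exp_le_cancel_iff)
    from mult_left_mono[OF this v.prod_nn[OF y]]
    have "exp (- real n * (\<theta> * t - Lam K a w \<theta> + \<bar>\<theta>\<bar> * \<epsilon>)) * (\<Prod>i<n. tlt K a w \<theta> (y i))
        \<le> (\<Prod>i<n. tlt K a w \<theta> (y i)) * exp (real n * Lam K a w \<theta> - \<theta> * (\<Sum>i<n. a (y i)))"
      by (simp add: mult.commute)
    also have "\<dots> = (\<Prod>i<n. w (y i))" by (rule change_measure[OF y, symmetric])
    finally show ?thesis using True unfolding Z_def by simp
  next
    case False
    then have "\<not> ((\<Sum>i<n. a (y i)) / real n \<in> {t - \<epsilon><..<t + \<epsilon>})" unfolding Z_def .
    then show ?thesis by (simp del: greaterThanLessThan_iff)
  qed
qed

end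


lemma exp_tend0: "0 < c \<Longrightarrow> (\<lambda>n. exp (- real n * c)) \<longlonglongrightarrow> 0"
proof -
  assume c: "0 < c"
  have "(\<lambda>n. exp (- c) ^ n) \<longlonglongrightarrow> 0" using c by (intro LIMSEQ_realpow_zero) auto
  then show ?thesis by (simp add: exp_of_nat_mult[symmetric] mult.commute)
qed

lemma ev_ln2: "0 < d \<Longrightarrow> eventually (\<lambda>n. ln 2 / real n < d) sequentially"
proof -
  assume d: "0 < d"
  have "(\<lambda>n. ln 2 * inverse (real n)) \<longlonglongrightarrow> ln 2 * 0" by (intro tendsto_intros lim_inverse_n)
  then have "(\<lambda>n. ln 2 / real n) \<longlonglongrightarrow> 0" by (simp add: divide_inverse)
  then show ?thesis using d by (rule order_tendstoD)
qed

context core begin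

lemma lower_int:
  assumes G: "open G" "t \<in> G" and th: "mn K a w \<theta> = t" and x: "\<theta> * t - Lam K a w \<theta> < x"
  shows "ereal (- x) \<le> liminf (\<lambda>n. ereal (1 / real n) * elog (Pr K a w n G))"
proof -
  define J0 where "J0 = \<theta> * t - Lam K a w \<theta>"
  obtain e0 where e0: "e0 > 0" "ball t e0 \<subseteq> G" using G by (auto simp: open_contains_ball)
  define \<epsilon> where "\<epsilon> = min (e0/2) ((x - J0) / (2 * (\<bar>\<theta>\<bar> + 1)))"
  have xJ: "0 < x - J0" using x J0_def by simp
  have eps: "0 < \<epsilon>" using e0 xJ by (simp add: \<epsilon>_def)
  have "\<bar>\<theta>\<bar> * \<epsilon> \<le> (\<bar>\<theta>\<bar> + 1) * \<epsilon>" using eps by (intro mult_right_mono) auto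
  also have "\<dots> \<le> (\<bar>\<theta>\<bar> + 1) * ((x - J0) / (2 * (\<bar>\<theta>\<bar> + 1)))"
    by (intro mult_left_mono) (auto simp: \<epsilon>_def)
  also have "\<dots> = (x - J0) / 2" by (simp add: field_simps)
  finally have te: "\<bar>\<theta>\<bar> * \<epsilon> < x - J0" using xJ by argo
  have UG: "{t-\<epsilon><..<t+\<epsilon>} \<subseteq> G"
  proof
    fix z assume "z \<in> {t-\<epsilon><..<t+\<epsilon>}"
    then have "dist t z < e0" using e0 by (auto simp: dist_real_def \<epsilon>_def)
    then show "z \<in> G" using e0 by auto
  qed
  define \<nu> where "\<nu> = tlt K a w \<theta>"
  interpret v: core K a \<nu> lo hi unfolding \<nu>_def by (rule core_tl)
  have mnv: "mn K a \<nu> 0 = t" using th unfolding mn_def v.tl0 by (simp add: \<nu>_def)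
  obtain \<theta>1 where th1: "\<theta>1 > 0" "0 < \<theta>1 * (t+\<epsilon>) - Lam K a \<nu> \<theta>1"
    using v.pos_rate_above[of "t+\<epsilon>"] mnv eps by auto
  obtain \<theta>2 where th2: "\<theta>2 < 0" "0 < \<theta>2 * (t-\<epsilon>) - Lam K a \<nu> \<theta>2"
    using v.pos_rate_below[of "t-\<epsilon>"] mnv eps by auto
  define c1 where "c1 = \<theta>1 * (t+\<epsilon>) - Lam K a \<nu> \<theta>1"
  define c2 where "c2 = \<theta>2 * (t-\<epsilon>) - Lam K a \<nu> \<theta>2"
  have ev1: "eventually (\<lambda>n. exp (- real n * c1) < 1/4) sequentially"
    using exp_tend0[of c1] th1 c1_def by (intro order_tendstoD) auto
  have ev2: "eventually (\<lambda>n. exp (- real n * c2) < 1/4) sequentially"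
    using exp_tend0[of c2] th2 c2_def by (intro order_tendstoD) auto
  have ev3: "eventually (\<lambda>n. ln 2 / real n < x - J0 - \<bar>\<theta>\<bar> * \<epsilon>) sequentially"
    using te by (intro ev_ln2) auto
  have "eventually (\<lambda>n. ereal (- x) \<le> ereal (1 / real n) * elog (Pr K a w n G)) sequentially"
    using ev1 ev2 ev3 eventually_gt_at_top[of 0]
  proof eventually_elim
    case (elim n)
    then have n: "0 < n" by simp
    have p1: "Pr K a \<nu> n {t+\<epsilon>..} \<le> exp (- real n * c1)" unfolding c1_def
      using th1 by (intro v.chernoff n) auto
    have p2: "Pr K a \<nu> n {..t-\<epsilon>} \<le> exp (- real n * c2)" unfolding c2_def
      using th2 by (intro v.chernoff n) (auto intro: mult_nonpos_nonpos)
    have "1 - Pr K a \<nu> n {t-\<epsilon><..<t+\<epsilon>} = Pr K a \<nu> n (- {t-\<epsilon><..<t+\<epsilon>})" by (simp add: v.Pr_compl)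
    also have "\<dots> \<le> Pr K a \<nu> n ({t+\<epsilon>..} \<union> {..t-\<epsilon>})" by (intro v.Pr_mono) auto
    also have "\<dots> \<le> Pr K a \<nu> n {t+\<epsilon>..} + Pr K a \<nu> n {..t-\<epsilon>}" by (rule v.Pr_Un)
    finally have "1/2 \<le> Pr K a \<nu> n {t-\<epsilon><..<t+\<epsilon>}" using p1 p2 elim by simp
    then have "exp (- real n * (J0 + \<bar>\<theta>\<bar> * \<epsilon>)) * (1/2) \<le> exp (- real n * (J0 + \<bar>\<theta>\<bar> * \<epsilon>)) * Pr K a \<nu> n {t-\<epsilon><..<t+\<epsilon>}"
      by (intro mult_left_mono) auto
    also have "\<dots> \<le> Pr K a w n {t-\<epsilon><..<t+\<epsilon>}"
      unfolding J0_def \<nu>_def by (rule Pr_tilt_lower[OF n])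
    also have "\<dots> \<le> Pr K a w n G" by (rule Pr_mono[OF UG])
    finally have P: "exp (- real n * (J0 + \<bar>\<theta>\<bar> * \<epsilon>)) * (1/2) \<le> Pr K a w n G" .
    have "real n * (ln 2 / real n) < real n * (x - J0 - \<bar>\<theta>\<bar> * \<epsilon>)"
      using elim n by (intro mult_strict_left_mono) auto
    then have "real n * (- x) \<le> - real n * (J0 + \<bar>\<theta>\<bar> * \<epsilon>) - ln 2"
      using n by (simp add: algebra_simps)
    then have "exp (real n * (- x)) \<le> exp (- real n * (J0 + \<bar>\<theta>\<bar> * \<epsilon>) - ln 2)" by simp
    also have "\<dots> = exp (- real n * (J0 + \<bar>\<theta>\<bar> * \<epsilon>)) * (1/2)" by (simp add: exp_diff)
    finally show ?case using P by (intro elog_low n) auto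
  qed
  then show ?thesis by (rule Liminf_bounded)
qed

lemma lower_single:
  assumes G: "t \<in> G" and k: "k < K" "a k = t"
  shows "ereal (ln (w k)) \<le> liminf (\<lambda>n. ereal (1 / real n) * elog (Pr K a w n G))"
proof (rule Liminf_bounded)
  show "eventually (\<lambda>n. ereal (ln (w k)) \<le> ereal (1 / real n) * elog (Pr K a w n G)) sequentially"
    using eventually_gt_at_top[of 0]
  proof eventually_elim
    case (elim n)
    have "exp (real n * ln (w k)) = w k ^ n" using wpos[OF k(1)] by (simp add: exp_of_nat_mult)
    also have "\<dots> \<le> Pr K a w n G" using k G elim by (intro Pr_single) auto
    finally show ?case using elim by (intro elog_low) auto
  qed
qed

lemma lower_pt:
  assumes G: "open G" "t \<in> G"
  shows "- Leg K a w t \<le> liminf (\<lambda>n. ereal (1 / real n) * elog (Pr K a w n G))"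
proof -
  consider "t < a lo" | "t = a lo" | "a lo < t \<and> t < a hi" | "t = a hi" | "a hi < t" by linarith
  then show ?thesis
  proof cases
    case 1 then show ?thesis using Leg_below by simp
  next
    case 5 then show ?thesis using Leg_above by simp
  next
    case 2 then show ?thesis using lower_single[OF G(2) lo] Leg_lo by simp
  next
    case 4 then show ?thesis using lower_single[OF G(2) hi] Leg_hi by simp
  next
    case 3
    then obtain \<theta> where th: "mn K a w \<theta> = t" using mn_surj by blast
    have "ereal (- (\<theta> * t - Lam K a w \<theta>)) \<le> liminf (\<lambda>n. ereal (1 / real n) * elog (Pr K a w n G))"
    proof (rule dense_le)
      fix z assume z: "z < ereal (- (\<theta> * t - Lam K a w \<theta>))"
      show "z \<le> liminf (\<lambda>n. ereal (1 / real n) * elog (Pr K a w n G))"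
      proof (cases z)
        case (real y)
        then have "ereal (- (- y)) \<le> liminf (\<lambda>n. ereal (1 / real n) * elog (Pr K a w n G))"
          using z by (intro lower_int[OF G th]) auto
        then show ?thesis using real by simp
      qed (use z in auto)
    qed
    then show ?thesis using Leg_int[OF th] by simp
  qed
qed

lemma lower_bound:
  assumes G: "open G"
  shows "- (INF t\<in>G. Leg K a w t) \<le> liminf (\<lambda>n. ereal (1 / real n) * elog (Pr K a w n G))"
proof -
  have "- liminf (\<lambda>n. ereal (1 / real n) * elog (Pr K a w n G)) \<le> (INF t\<in>G. Leg K a w t)"
    using lower_pt[OF G] by (intro INF_greatest) (simp add: ereal_uminus_le_reorder)
  then show ?thesis by (simp add: ereal_uminus_le_reorder)
qed

end



lemma elog_mono: "P \<le> Q \<Longrightarrow> elog P \<le> elog Q"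
  by (auto simp: elog_def)

lemma rate_mono: "P \<le> Q \<Longrightarrow> ereal (1 / real n) * elog P \<le> ereal (1 / real n) * elog Q"
  by (intro ereal_mult_left_mono elog_mono) auto

theorem mainTheorem4:
  fixes K :: nat and \<zeta> :: real and p q :: "nat \<Rightarrow> real"
    and kmax kmin :: nat and \<delta> :: real
  assumes "K \<ge> 2" and "0 < \<zeta>" and "\<zeta> < 1 / real K"
    and "in_S K \<zeta> p" and "in_S K \<zeta> q"
    and "kmax < K" and "\<forall>k<K. q k \<le> q kmax"
    and "kmin < K" and "\<forall>k<K. q kmin \<le> q k"
    and "0 \<le> \<delta>" and "\<delta> < ln (1 / p kmax)"
  shows "continuous_on UNIV (\<lambda>\<beta>. cross_ent K (tilt K q p \<beta>) q)
       \<and> (\<forall>\<beta>1 \<beta>2. \<beta>1 < \<beta>2 \<longrightarrow>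
            cross_ent K (tilt K q p \<beta>2) q < cross_ent K (tilt K q p \<beta>1) q)
       \<and> bij_betw (\<lambda>\<beta>. cross_ent K (tilt K q p \<beta>) q) UNIV
            {ln (1 / q kmax) <..< ln (1 / q kmin)}
       \<and> LDP (neg_reward_prob K q (phi K q p \<delta>))
           (\<lambda>t. if t \<in> {ln (1 / q kmax) <..< ln (1 / q kmin)}
                 then ereal (KL K (tilt K q p
                        (THE \<beta>. cross_ent K (tilt K q p \<beta>) q = t)) (phi K q p \<delta>))
                 else if t = ln (1 / q kmax) then ereal (ln (1 / phi K q p \<delta> kmax))
                 else if t = ln (1 / q kmin) then ereal (ln (1 / phi K q p \<delta> kmin))
                 else \<infinity>)"
proof -
  have qpos: "\<And>k. k < K \<Longrightarrow> 0 < q k" using assms(2,5) unfolding in_S_def by force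
  have ppos: "\<And>k. k < K \<Longrightarrow> 0 < p k" using assms(2,4) unfolding in_S_def by force
  have psum: "(\<Sum>k<K. p k) = 1" using assms(4) unfolding in_S_def by auto
  have qdist: "\<And>i j. i < K \<Longrightarrow> j < K \<Longrightarrow> i \<noteq> j \<Longrightarrow> q i \<noteq> q j" using assms(5) unfolding in_S_def by auto
  define a where "a = (\<lambda>k. ln (1 / q k))"
  have a_alt: "\<And>k. a k = - ln (q k)" unfolding a_def by (simp add: ln_div)
  have lohi: "kmax \<noteq> kmin"
  proof
    assume eq: "kmax = kmin"
    have "q 0 = q 1" using assms(1,7,9) eq by (metis order_antisym less_le_trans one_less_numeral_iff pos2 semiring_norm(76))
    then show False using qdist[of 0 1] assms(1) by auto
  qed
  have alo: "a kmax < a k" if "k < K" "k \<noteq> kmax" for k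
  proof -
    have "q k < q kmax" using assms(7) qdist[of k kmax] that assms(6) by force
    then show ?thesis unfolding a_alt using qpos[OF that(1)] qpos[OF assms(6)] by simp
  qed
  have ahi: "a k < a kmin" if "k < K" "k \<noteq> kmin" for k
  proof -
    have "q kmin < q k" using assms(9) qdist[of k kmin] that assms(8) by force
    then show ?thesis unfolding a_alt using qpos[OF that(1)] qpos[OF assms(8)] by simp
  qed
  interpret P: core K a p kmax kmin
    by unfold_locales (use ppos psum assms(6,8) lohi alo ahi in auto)
  have tilt_eq: "tilt K q p \<beta> k = tlt K a p (- \<beta>) k" if "k < K" for \<beta> k
  proof -
    have pw: "q j powr \<beta> = exp (- \<beta> * a j)" if "j < K" for j
      using qpos[OF that] by (simp add: powr_def a_alt)
    have "Mz K a p (- \<beta>) = (\<Sum>j<K. p j * q j powr \<beta>)"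
      unfolding Mz_def by (intro sum.cong) (auto simp: pw)
    then show ?thesis unfolding tilt_def tlt_def using pw[OF that] by simp
  qed
  have ce: "cross_ent K (tilt K q p \<beta>) q = mn K a p (- \<beta>)" for \<beta>
    unfolding cross_ent_def mn_def by (intro sum.cong) (auto simp: tilt_eq a_def)
  define \<alpha>0 where "\<alpha>0 = alpha_of K q p \<delta>"
  define \<phi> where "\<phi> = phi K q p \<delta>"
  have phi_eq: "\<phi> k = tlt K a p (- \<alpha>0) k" if "k < K" for k
    unfolding \<phi>_def phi_def \<alpha>0_def using that by (rule tilt_eq)
  interpret F: core K a \<phi> kmax kmin
  proof unfold_locales
    show "0 < \<phi> k" if "k < K" for k using phi_eq[OF that] P.tlt_pos[OF that] by simp
    show "(\<Sum>k<K. \<phi> k) = 1" using P.tlt_sum[of "- \<alpha>0"] by (simp add: phi_eq)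
  qed (use assms(6,8) lohi alo ahi in auto)
  have tlt_phi: "tlt K a \<phi> \<theta> k = tlt K a p (\<theta> - \<alpha>0) k" if "k < K" for \<theta> k
  proof -
    have "Mz K a \<phi> \<theta> = Mz K a (tlt K a p (- \<alpha>0)) \<theta>"
      unfolding Mz_def by (intro sum.cong) (auto simp: phi_eq)
    then have "tlt K a \<phi> \<theta> k = tlt K a p (- \<alpha>0) k * exp (\<theta> * a k) / Mz K a (tlt K a p (- \<alpha>0)) \<theta>"
      using phi_eq[OF that] by (simp only: tlt_def[of K a \<phi>])
    also have "\<dots> = tlt K a (tlt K a p (- \<alpha>0)) \<theta> k" by (rule tlt_def[symmetric])
    finally have "tlt K a \<phi> \<theta> k = tlt K a (tlt K a p (- \<alpha>0)) \<theta> k" .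
    also have "\<dots> = tlt K a p (\<theta> - \<alpha>0) k" using P.tlt_tl[of "- \<alpha>0" \<theta> k] by simp
    finally show ?thesis .
  qed
  have A: "ln (1 / q kmax) = a kmax" and B: "ln (1 / q kmin) = a kmin" by (simp_all add: a_def)
  have cont: "continuous_on UNIV (\<lambda>\<beta>. cross_ent K (tilt K q p \<beta>) q)"
    unfolding ce by (rule continuous_on_compose2[OF P.mn_cont]) (auto intro: continuous_intros)
  have mono: "\<forall>\<beta>1 \<beta>2. \<beta>1 < \<beta>2 \<longrightarrow> cross_ent K (tilt K q p \<beta>2) q < cross_ent K (tilt K q p \<beta>1) q"
    unfolding ce using P.mn_mono by auto
  have surj: "\<exists>\<beta>. cross_ent K (tilt K q p \<beta>) q = t" if tin: "t \<in> {a kmax<..<a kmin}" for t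
  proof -
    obtain \<theta> where "mn K a p \<theta> = t" using P.mn_surj[of t] tin by auto
    then show ?thesis unfolding ce by (intro exI[of _ "- \<theta>"]) simp
  qed
  have inj: "cross_ent K (tilt K q p \<beta>1) q = cross_ent K (tilt K q p \<beta>2) q \<Longrightarrow> \<beta>1 = \<beta>2" for \<beta>1 \<beta>2
    unfolding ce using P.mn_inj by force
  have bij: "bij_betw (\<lambda>\<beta>. cross_ent K (tilt K q p \<beta>) q) UNIV {ln (1 / q kmax) <..< ln (1 / q kmin)}"
    unfolding A B bij_betw_def
  proof
    show "inj (\<lambda>\<beta>. cross_ent K (tilt K q p \<beta>) q)" using inj by (auto intro: injI)
    show "range (\<lambda>\<beta>. cross_ent K (tilt K q p \<beta>) q) = {a kmax<..<a kmin}"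
      using surj P.mn_gt P.mn_lt unfolding ce by fastforce
  qed
  have Peq: "neg_reward_prob K q \<phi> = Pr K a \<phi>"
  proof (intro ext)
    fix m B
    show "neg_reward_prob K q \<phi> m B = Pr K a \<phi> m B"
      unfolding neg_reward_prob_def Pr_def sum.inter_filter[OF finPi]
    proof (intro sum.cong refl)
      fix y assume y: "y \<in> PiE {..<m} (\<lambda>_. {..<K})"
      then have yk: "\<And>i. i < m \<Longrightarrow> y i < K" by (auto simp: PiE_iff)
      have "ln (\<Prod>i<m. q (y i)) = (\<Sum>i<m. ln (q (y i)))"
        using qpos yk by (intro ln_prod) (auto, metis less_irrefl)
      then have "- (1 / real m) * ln (\<Prod>i<m. q (y i)) = (\<Sum>i<m. a (y i)) / real m"
        by (simp add: a_alt sum_negf)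
      then show "(if - (1 / real m) * ln (\<Prod>i<m. q (y i)) \<in> B then \<Prod>i<m. \<phi> (y i) else 0) =
                 (if (\<Sum>i<m. a (y i)) / real m \<in> B then \<Prod>i<m. \<phi> (y i) else 0)" by simp
    qed
  qed
  have Jeq: "(\<lambda>t. if t \<in> {ln (1 / q kmax) <..< ln (1 / q kmin)}
                 then ereal (KL K (tilt K q p
                        (THE \<beta>. cross_ent K (tilt K q p \<beta>) q = t)) (phi K q p \<delta>))
                 else if t = ln (1 / q kmax) then ereal (ln (1 / phi K q p \<delta> kmax))
                 else if t = ln (1 / q kmin) then ereal (ln (1 / phi K q p \<delta> kmin))
                 else \<infinity>) = Leg K a \<phi>"
  proof (intro ext)
    fix t
    consider "t \<in> {a kmax<..<a kmin}" | "t = a kmax" | "t = a kmin" | "t < a kmax" | "a kmin < t"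
      by fastforce
    then show "(if t \<in> {ln (1 / q kmax) <..< ln (1 / q kmin)}
                 then ereal (KL K (tilt K q p
                        (THE \<beta>. cross_ent K (tilt K q p \<beta>) q = t)) (phi K q p \<delta>))
                 else if t = ln (1 / q kmax) then ereal (ln (1 / phi K q p \<delta> kmax))
                 else if t = ln (1 / q kmin) then ereal (ln (1 / phi K q p \<delta> kmin))
                 else \<infinity>) = Leg K a \<phi> t"
    proof cases
      case 1
      obtain \<beta>0 where b0: "cross_ent K (tilt K q p \<beta>0) q = t" using surj[OF 1] by blast
      have the: "(THE \<beta>. cross_ent K (tilt K q p \<beta>) q = t) = \<beta>0"
        using b0 inj by (intro the_equality) auto
      define \<theta> where "\<theta> = \<alpha>0 - \<beta>0"
      have tt: "tilt K q p \<beta>0 k = tlt K a \<phi> \<theta> k" if "k < K" for k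
        using that by (simp add: tilt_eq tlt_phi \<theta>_def)
      have KLeq: "KL K (tilt K q p \<beta>0) \<phi> = KL K (tlt K a \<phi> \<theta>) \<phi>"
        unfolding KL_def by (intro sum.cong) (auto simp: tt)
      have mnt: "mn K a \<phi> \<theta> = t"
      proof -
        have "mn K a \<phi> \<theta> = cross_ent K (tilt K q p \<beta>0) q"
          unfolding mn_def cross_ent_def by (intro sum.cong) (auto simp: tt a_def)
        then show ?thesis using b0 by simp
      qed
      show ?thesis using 1 unfolding A B the \<phi>_def[symmetric] KLeq F.KL_tlt F.Leg_int[OF mnt] mnt
        by simp
    next
      case 2 then show ?thesis unfolding A B \<phi>_def[symmetric] using F.Leg_lo F.wpos[OF assms(6)]
        by (simp add: ln_div)
    next
      case 3 then show ?thesis unfolding A B \<phi>_def[symmetric] using F.Leg_hi F.wpos[OF assms(8)] lohi alo[OF assms(8)]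
        by (simp add: ln_div)
    next
      case 4 then show ?thesis unfolding A B \<phi>_def[symmetric] using F.Leg_below ahi[OF assms(6)] lohi
        by auto
    next
      case 5 then show ?thesis unfolding A B \<phi>_def[symmetric] using F.Leg_above alo[OF assms(8)] lohi
        by auto
    qed
  qed
  have ldp: "LDP (Pr K a \<phi>) (Leg K a \<phi>)"
    unfolding LDP_def
  proof (intro conjI allI ballI)
    show "0 \<le> Leg K a \<phi> t" for t by (rule F.Leg_nonneg)
    show "open {t. c < Leg K a \<phi> t}" for c by (rule Leg_open)
    show "compact {t. Leg K a \<phi> t \<le> ereal c}" for c by (rule F.Leg_compact)
    fix B :: "real set"
    show "- (INF t\<in>interior B. Leg K a \<phi> t) \<le> liminf (\<lambda>n. ereal (1 / real n) * elog (Pr K a \<phi> n B))"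
    proof -
      have "liminf (\<lambda>n. ereal (1 / real n) * elog (Pr K a \<phi> n (interior B))) \<le> liminf (\<lambda>n. ereal (1 / real n) * elog (Pr K a \<phi> n B))"
        by (intro Liminf_mono always_eventually allI rate_mono F.Pr_mono interior_subset)
      then show ?thesis using F.lower_bound[OF open_interior, of B] by (rule order.trans[rotated])
    qed
    show "liminf (\<lambda>n. ereal (1 / real n) * elog (Pr K a \<phi> n B)) \<le> limsup (\<lambda>n. ereal (1 / real n) * elog (Pr K a \<phi> n B))"
      by (rule Liminf_le_Limsup) simp
    show "limsup (\<lambda>n. ereal (1 / real n) * elog (Pr K a \<phi> n B)) \<le> - (INF t\<in>closure B. Leg K a \<phi> t)"
    proof -
      have "limsup (\<lambda>n. ereal (1 / real n) * elog (Pr K a \<phi> n B)) \<le> limsup (\<lambda>n. ereal (1 / real n) * elog (Pr K a \<phi> n (closure B)))"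
        by (intro Limsup_mono always_eventually allI rate_mono F.Pr_mono closure_subset)
      then show ?thesis using F.upper_bound[OF closed_closure, of B] by (rule order.trans)
    qed
  qed
  have ldp2: "LDP (neg_reward_prob K q \<phi>) (Leg K a \<phi>)" using ldp Peq by simp
  show ?thesis using cont mono bij ldp2 unfolding Jeq unfolding \<phi>_def by simp
qed


end
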